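(* Let $U$ be a nonempty finite set and $R\subseteq U\times U$ a serial and transitive relation, and let $h$ be the height function of the lattice $(Reg(U,R),\subseteq)$. Define $$\mathbf{I}(Reg(U,R);h)=\{X\subseteq U\mid h(Y)\ge |X\cap Y| \text{ for all } Y\in Reg(U,R)\}.$$ Then $\mathbf{I}(Reg(U,R);h)$ satisfies the independent set axioms of a matroid on $U$: (I1) $\emptyset\in\mathbf{I}$; (I2) if $I\in\mathbf{I}$ and $I'\subseteq I$ then $I'\in\mathbf{I}$; (I3) if $I_1,I_2\in\mathbf{I}$ and $|I_1|<|I_2|$, then there exists $e\in I_2\setminus I_1$ with $I_1\cup\{e\}\in\mathbf{I}$.
   Context: $R_s(x)=\{y\in U\mid xRy\}$. $R$ is serial if every $x$ has some $y$ with $xRy$; transitive in the usual sense. $\underline{R}(X)=\{x\in U\mid R_s(x)\subseteq X\}$, $\overline{R}(X)=\{x\in U\mid R_s(x)\cap X\neq\emptyset\}$. $X\subseteq U$ is regular if $X=\underline{R}(\overline{R}(X))$; $Reg(U,R)$ is the set of regular sets ordered by inclusion (its least element is $\emptyset$). For $A\in Reg(U,R)$, the height $h(A)$ is the length (number of elements minus one) of a maximal chain in the interval $[\emptyset,A]=\{B\in Reg(U,R)\mid B\subseteq A\}$ (all such maximal chains have the same length in this finite lattice). *)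

theory Defs
  imports Main
begin

definition successors :: "('a \<times> 'a) set \<Rightarrow> 'a \<Rightarrow> 'a set" where
  "successors R x = {y. (x, y) \<in> R}"

definition serial_on :: "'a set \<Rightarrow> ('a \<times> 'a) set \<Rightarrow> bool" where
  "serial_on U R \<longleftrightarrow> (\<forall>x\<in>U. \<exists>y. (x, y) \<in> R)"

definition lower_approx :: "'a set \<Rightarrow> ('a \<times> 'a) set \<Rightarrow> 'a set \<Rightarrow> 'a set" where
  "lower_approx U R X = {x\<in>U. successors R x \<subseteq> X}"

definition upper_approx :: "'a set \<Rightarrow> ('a \<times> 'a) set \<Rightarrow> 'a set \<Rightarrow> 'a set" where
  "upper_approx U R X = {x\<in>U. successors R x \<inter> X \<noteq> {}}"

definition Reg :: "'a set \<Rightarrow> ('a \<times> 'a) set \<Rightarrow> 'a set set" where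
  "Reg U R = {X. X \<subseteq> U \<and> X = lower_approx U R (upper_approx U R X)}"

definition reg_chain :: "'a set \<Rightarrow> ('a \<times> 'a) set \<Rightarrow> 'a set \<Rightarrow> 'a set set \<Rightarrow> bool" where
  "reg_chain U R A C \<longleftrightarrow> C \<subseteq> {B \<in> Reg U R. B \<subseteq> A} \<and>
     (\<forall>X\<in>C. \<forall>Y\<in>C. X \<subseteq> Y \<or> Y \<subseteq> X)"

definition maximal_reg_chain :: "'a set \<Rightarrow> ('a \<times> 'a) set \<Rightarrow> 'a set \<Rightarrow> 'a set set \<Rightarrow> bool" where
  "maximal_reg_chain U R A C \<longleftrightarrow> reg_chain U R A C \<and>
     (\<forall>C'. reg_chain U R A C' \<and> C \<subseteq> C' \<longrightarrow> C' = C)"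

definition height :: "'a set \<Rightarrow> ('a \<times> 'a) set \<Rightarrow> 'a set \<Rightarrow> nat" where
  "height U R A = (SOME n. \<exists>C. maximal_reg_chain U R A C \<and> n = card C - 1)"

definition indep_sets :: "'a set \<Rightarrow> ('a \<times> 'a) set \<Rightarrow> 'a set set" where
  "indep_sets U R = {X. X \<subseteq> U \<and> (\<forall>Y\<in>Reg U R. card (X \<inter> Y) \<le> height U R Y)}"

end

theory Submission
  imports Defs
begin

locale srt =
  fixes U :: "'a set" and R :: "('a \<times> 'a) set"
  assumes fin: "finite U" and RU: "R \<subseteq> U \<times> U"
    and ser: "serial_on U R" and tr: "trans R"
begin

definition term_pt where "term_pt y \<longleftrightarrow> y \<in> U \<and> (\<forall>z. (y,z) \<in> R \<longrightarrow> (z,y) \<in> R)"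
definition Cl where "Cl = successors R ` {y. term_pt y}"
definition sig where "sig X = {c\<in>Cl. c \<inter> X \<noteq> {}}"
definition phi where "phi S = {x\<in>U. \<forall>c\<in>Cl. c \<subseteq> successors R x \<longrightarrow> c \<in> S}"

lemma succ_U: "successors R x \<subseteq> U" using RU by (auto simp: successors_def)
lemma fin_succ: "finite (successors R x)" using succ_U fin finite_subset by blast
lemma succ_trans: "y \<in> successors R x \<Longrightarrow> successors R y \<subseteq> successors R x"
  using tr unfolding successors_def trans_def by blast

lemma term_refl: "term_pt y \<Longrightarrow> y \<in> successors R y"
proof -
  assume t: "term_pt y"
  then obtain z where "(y,z) \<in> R" using ser unfolding serial_on_def term_pt_def by blast
  with t have "(z,y) \<in> R" unfolding term_pt_def by blast
  with \<open>(y,z) \<in> R\<close> show ?thesis using tr unfolding trans_def successors_def by blast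
qed

lemma term_succ: assumes "term_pt y" "z \<in> successors R y"
  shows "term_pt z \<and> successors R z = successors R y"
proof -
  have yz: "(y,z) \<in> R" using assms(2) by (simp add: successors_def)
  hence zy: "(z,y) \<in> R" using assms(1) term_pt_def by blast
  have "z \<in> U" using yz RU by auto
  moreover have "\<forall>w. (z,w) \<in> R \<longrightarrow> (w,z) \<in> R"
  proof (intro allI impI)
    fix w assume "(z,w) \<in> R"
    hence "(y,w) \<in> R" using yz tr unfolding trans_def by blast
    hence "(w,y) \<in> R" using assms(1) term_pt_def by blast
    thus "(w,z) \<in> R" using yz tr unfolding trans_def by blast
  qed
  moreover have "successors R z = successors R y"
    using yz zy tr unfolding successors_def trans_def by blast
  ultimately show ?thesis unfolding term_pt_def by blast
qed

lemma reach_term: assumes "x \<in> U" shows "\<exists>w. term_pt w \<and> w \<in> successors R x"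
proof -
  obtain y0 where "y0 \<in> successors R x" using ser assms by (auto simp: serial_on_def successors_def)
  then obtain y where y: "y \<in> successors R x"
    and ymin: "\<And>y'. y' \<in> successors R x \<Longrightarrow> card (successors R y) \<le> card (successors R y')"
    using ex_has_least_nat[of "\<lambda>y. y \<in> successors R x" y0 "\<lambda>y. card (successors R y)"] by blast
  have "y \<in> U" using y succ_U by blast
  then obtain w where w: "w \<in> successors R y" using ser by (auto simp: serial_on_def successors_def)
  have wx: "w \<in> successors R x" using w y succ_trans by blast
  have sw: "successors R w = successors R y"
    using succ_trans[OF w] ymin[OF wx] fin_succ by (meson card_seteq)
  have "term_pt w"
    unfolding term_pt_def
  proof (intro conjI allI impI)
    show "w \<in> U" using wx succ_U by blast
    fix z assume "(w,z) \<in> R"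
    hence z: "z \<in> successors R w" by (simp add: successors_def)
    hence zx: "z \<in> successors R x" using wx succ_trans by blast
    have "successors R z = successors R w"
      using succ_trans[OF z] ymin[OF zx] sw fin_succ by (metis card_seteq)
    hence "w \<in> successors R z" using w sw by simp
    thus "(z,w) \<in> R" by (simp add: successors_def)
  qed
  thus ?thesis using wx by blast
qed

lemma LU_eq: "lower_approx U R (upper_approx U R X) = phi (sig X)"
proof (rule set_eqI, rule iffI)
  fix x assume "x \<in> lower_approx U R (upper_approx U R X)"
  hence x: "x \<in> U" "\<And>y. y \<in> successors R x \<Longrightarrow> successors R y \<inter> X \<noteq> {}"
    unfolding lower_approx_def upper_approx_def by auto
  have "\<forall>c\<in>Cl. c \<subseteq> successors R x \<longrightarrow> c \<in> sig X"
  proof (intro ballI impI)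
    fix c assume c: "c \<in> Cl" "c \<subseteq> successors R x"
    then obtain t where t: "term_pt t" "c = successors R t" unfolding Cl_def by blast
    hence "t \<in> successors R x" using c term_refl by blast
    thus "c \<in> sig X" using x(2) t c unfolding sig_def by blast
  qed
  thus "x \<in> phi (sig X)" using x(1) unfolding phi_def by blast
next
  fix x assume "x \<in> phi (sig X)"
  hence x: "x \<in> U" "\<And>c. c \<in> Cl \<Longrightarrow> c \<subseteq> successors R x \<Longrightarrow> c \<inter> X \<noteq> {}"
    unfolding phi_def sig_def by auto
  have "\<forall>y\<in>successors R x. y \<in> U \<and> successors R y \<inter> X \<noteq> {}"
  proof
    fix y assume y: "y \<in> successors R x"
    hence "y \<in> U" using succ_U by blast
    then obtain w where w: "term_pt w" "w \<in> successors R y" using reach_term by blast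
    have c: "successors R w \<in> Cl" using w unfolding Cl_def by blast
    have "successors R w \<subseteq> successors R y" using succ_trans w by blast
    moreover hence "successors R w \<subseteq> successors R x" using succ_trans y by blast
    ultimately show "y \<in> U \<and> successors R y \<inter> X \<noteq> {}" using x(2)[OF c] \<open>y \<in> U\<close> by blast
  qed
  thus "x \<in> lower_approx U R (upper_approx U R X)"
    unfolding lower_approx_def upper_approx_def using x(1) by blast
qed

lemma sig_phi: assumes "S \<subseteq> Cl" shows "sig (phi S) = S"
proof (rule set_eqI, rule iffI)
  fix c assume "c \<in> sig (phi S)"
  then obtain z where c: "c \<in> Cl" "z \<in> c" "z \<in> phi S" unfolding sig_def by blast
  then obtain t where t: "term_pt t" "c = successors R t" unfolding Cl_def by blast
  have "successors R z = c" using term_succ t c by blast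
  thus "c \<in> S" using c unfolding phi_def by blast
next
  fix c assume cS: "c \<in> S"
  hence c: "c \<in> Cl" using assms by blast
  then obtain t where t: "term_pt t" "c = successors R t" unfolding Cl_def by blast
  have "t \<in> phi S" unfolding phi_def
  proof (intro CollectI conjI ballI impI)
    show "t \<in> U" using t term_pt_def by blast
    fix c' assume c': "c' \<in> Cl" "c' \<subseteq> successors R t"
    then obtain t' where t': "term_pt t'" "c' = successors R t'" unfolding Cl_def by blast
    hence "t' \<in> successors R t" using c' term_refl by blast
    hence "c' = c" using term_succ t t' by blast
    thus "c' \<in> S" using cS by simp
  qed
  thus "c \<in> sig (phi S)" using t term_refl c unfolding sig_def by blast
qed

lemma phi_U: "phi S \<subseteq> U" unfolding phi_def by blast
lemma sig_Cl: "sig X \<subseteq> Cl" unfolding sig_def by blast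
lemma fin_Cl: "finite Cl"
proof -
  have "{y. term_pt y} \<subseteq> U" unfolding term_pt_def by blast
  thus ?thesis unfolding Cl_def using fin finite_subset by blast
qed
lemma phi_mono: "A \<subseteq> B \<Longrightarrow> phi A \<subseteq> phi B" unfolding phi_def by blast
lemma sig_mono: "A \<subseteq> B \<Longrightarrow> sig A \<subseteq> sig B" unfolding sig_def by blast
lemma phi_Int: "phi (A \<inter> B) = phi A \<inter> phi B" unfolding phi_def by blast
lemma phi_empty: "phi {} = {}"
proof -
  { fix x assume x: "x \<in> phi {}"
    hence "x \<in> U" unfolding phi_def by blast
    then obtain w where w: "term_pt w" "w \<in> successors R x" using reach_term by blast
    have "successors R w \<in> Cl" using w unfolding Cl_def by blast
    moreover have "successors R w \<subseteq> successors R x" using succ_trans w by blast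
    ultimately have False using x unfolding phi_def by blast }
  thus ?thesis by blast
qed

lemma Reg_iff: "X \<in> Reg U R \<longleftrightarrow> (\<exists>S\<subseteq>Cl. X = phi S)"
proof
  assume "X \<in> Reg U R"
  hence "X = phi (sig X)" unfolding Reg_def LU_eq by blast
  thus "\<exists>S\<subseteq>Cl. X = phi S" using sig_Cl by blast
next
  assume "\<exists>S\<subseteq>Cl. X = phi S"
  then obtain S where S: "S \<subseteq> Cl" "X = phi S" by blast
  have "phi (sig (phi S)) = phi S" using sig_phi[OF S(1)] by simp
  thus "X \<in> Reg U R" unfolding Reg_def LU_eq using S phi_U by blast
qed

lemma Reg_phi_sig: "X \<in> Reg U R \<Longrightarrow> phi (sig X) = X"
  unfolding Reg_def LU_eq by auto

lemma Reg_sub_iff: "X \<in> Reg U R \<Longrightarrow> Y \<in> Reg U R \<Longrightarrow> X \<subseteq> Y \<longleftrightarrow> sig X \<subseteq> sig Y"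
proof -
  assume a: "X \<in> Reg U R" "Y \<in> Reg U R"
  show ?thesis
  proof
    assume "X \<subseteq> Y" thus "sig X \<subseteq> sig Y" by (rule sig_mono)
  next
    assume "sig X \<subseteq> sig Y"
    hence "phi (sig X) \<subseteq> phi (sig Y)" by (rule phi_mono)
    thus "X \<subseteq> Y" using Reg_phi_sig[OF a(1)] Reg_phi_sig[OF a(2)] by simp
  qed
qed


lemma chain_Union_mem:
  assumes "finite F" "F \<noteq> {}" "\<forall>X\<in>F. \<forall>Y\<in>F. X \<subseteq> Y \<or> Y \<subseteq> X"
  shows "\<Union>F \<in> F \<and> \<Inter>F \<in> F"
  using assms
proof (induction F rule: finite_ne_induct)
  case (singleton x) then show ?case by simp
next
  case (insert x F)
  hence IH: "\<Union>F \<in> F" "\<Inter>F \<in> F" by auto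
  have c1: "x \<subseteq> \<Union>F \<or> \<Union>F \<subseteq> x" using insert.prems IH by blast
  have c2: "x \<subseteq> \<Inter>F \<or> \<Inter>F \<subseteq> x" using insert.prems IH by blast
  have "\<Union>(insert x F) \<in> insert x F" using c1 IH by (auto simp: Un_absorb1 Un_absorb2)
  moreover have "\<Inter>(insert x F) \<in> insert x F" using c2 IH
    by (metis Inf_insert inf.absorb_iff2 inf_absorb1 insert_iff le_iff_inf)
  ultimately show ?case by blast
qed

lemma Reg_empty: "{} \<in> Reg U R"
  using Reg_iff phi_empty by blast

lemma sig_empty: "sig {} = {}" unfolding sig_def by blast

lemma fin_sig: "finite (sig X)" using fin_Cl sig_Cl finite_subset by blast

lemma Reg_sig_inj: "X \<in> Reg U R \<Longrightarrow> Y \<in> Reg U R \<Longrightarrow> sig X = sig Y \<Longrightarrow> X = Y"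
  using Reg_phi_sig by metis

lemma max_chain_card:
  assumes A: "A \<in> Reg U R" and M: "maximal_reg_chain U R A C"
  shows "card C = card (sig A) + 1"
proof -
  have Cch: "C \<subseteq> {B \<in> Reg U R. B \<subseteq> A}" "\<forall>X\<in>C. \<forall>Y\<in>C. X \<subseteq> Y \<or> Y \<subseteq> X"
    using M unfolding maximal_reg_chain_def reg_chain_def by auto
  have maxi: "\<And>Z. Z \<in> Reg U R \<Longrightarrow> Z \<subseteq> A \<Longrightarrow> (\<forall>Y\<in>C. Y \<subseteq> Z \<or> Z \<subseteq> Y) \<Longrightarrow> Z \<in> C"
  proof -
    fix Z assume Z: "Z \<in> Reg U R" "Z \<subseteq> A" "\<forall>Y\<in>C. Y \<subseteq> Z \<or> Z \<subseteq> Y"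
    have s1: "insert Z C \<subseteq> {B \<in> Reg U R. B \<subseteq> A}" using Cch(1) Z(1,2) by blast
    have s2: "\<forall>X\<in>insert Z C. \<forall>Y\<in>insert Z C. X \<subseteq> Y \<or> Y \<subseteq> X"
    proof (intro ballI)
      fix X Y assume "X \<in> insert Z C" "Y \<in> insert Z C"
      thus "X \<subseteq> Y \<or> Y \<subseteq> X" using Cch(2) Z(3) by (cases "X = Z"; cases "Y = Z") auto
    qed
    have "reg_chain U R A (insert Z C)" unfolding reg_chain_def using s1 s2 by (rule conjI)
    moreover have "\<forall>C'. reg_chain U R A C' \<and> C \<subseteq> C' \<longrightarrow> C' = C"
      using M unfolding maximal_reg_chain_def by (rule conjunct2)
    ultimately have "insert Z C = C" by (meson subset_insertI)
    thus "Z \<in> C" by blast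
  qed
  have RegU: "\<And>X. X \<in> Reg U R \<Longrightarrow> X \<subseteq> U" unfolding Reg_def by blast
  have CA: "\<And>Y. Y \<in> C \<Longrightarrow> Y \<subseteq> A \<and> Y \<in> Reg U R" using Cch(1) by blast
  have finC: "finite C"
  proof -
    have "C \<subseteq> Pow U" using CA RegU by blast
    thus ?thesis using fin finite_subset by (metis finite_Pow_iff)
  qed
  have emp: "{} \<in> C" by (rule maxi[OF Reg_empty]) auto
  have AC: "A \<in> C" by (rule maxi[OF A]) (use CA in auto)
  have sigsub: "\<And>X Y. X \<in> C \<Longrightarrow> Y \<in> C \<Longrightarrow> X \<subseteq> Y \<Longrightarrow> sig X \<subseteq> sig Y"
    using sig_mono by blast
  have cardmono: "\<And>X Y. X \<in> C \<Longrightarrow> Y \<in> C \<Longrightarrow> X \<subseteq> Y \<Longrightarrow> card (sig X) \<le> card (sig Y)"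
    by (meson card_mono fin_sig sig_mono)
  have injC: "inj_on (\<lambda>Y. card (sig Y)) C"
  proof (rule inj_onI)
    fix X Y assume XY: "X \<in> C" "Y \<in> C" "card (sig X) = card (sig Y)"
    hence "X \<subseteq> Y \<or> Y \<subseteq> X" using Cch(2) by blast
    hence "sig X \<subseteq> sig Y \<or> sig Y \<subseteq> sig X" using sig_mono by blast
    hence "sig X = sig Y" using XY(3) fin_sig card_subset_eq by metis
    thus "X = Y" using Reg_sig_inj CA XY(1,2) by blast
  qed
  have img: "(\<lambda>Y. card (sig Y)) ` C = {0..card (sig A)}"
  proof
    show "(\<lambda>Y. card (sig Y)) ` C \<subseteq> {0..card (sig A)}"
    proof
      fix n assume "n \<in> (\<lambda>Y. card (sig Y)) ` C"
      then obtain Y where Y: "Y \<in> C" "n = card (sig Y)" by blast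
      have "Y \<subseteq> A" using Y Cch by blast
      thus "n \<in> {0..card (sig A)}" using cardmono[OF Y(1) AC] Y by simp
    qed
  next
    show "{0..card (sig A)} \<subseteq> (\<lambda>Y. card (sig Y)) ` C"
    proof
      fix j assume j: "j \<in> {0..card (sig A)}"
      show "j \<in> (\<lambda>Y. card (sig Y)) ` C"
      proof (rule ccontr)
        assume nj: "j \<notin> (\<lambda>Y. card (sig Y)) ` C"
        define L where "L = {Y\<in>C. card (sig Y) < j}"
        define G where "G = {Y\<in>C. card (sig Y) > j}"
        have CLG: "C = L \<union> G" using nj unfolding L_def G_def by force
        have "card (sig {}) \<noteq> j" using nj emp by blast
        hence "{} \<in> L" using emp sig_empty unfolding L_def by simp
        have "A \<in> G" using nj AC j unfolding G_def by force
        have chL: "\<forall>X\<in>sig ` L. \<forall>Y\<in>sig ` L. X \<subseteq> Y \<or> Y \<subseteq> X"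
        proof (intro ballI)
          fix X Y assume "X \<in> sig ` L" "Y \<in> sig ` L"
          then obtain X' Y' where "X' \<in> C" "Y' \<in> C" "X = sig X'" "Y = sig Y'" unfolding L_def by blast
          moreover have "X' \<subseteq> Y' \<or> Y' \<subseteq> X'" using Cch(2) calculation(1,2) by blast
          ultimately show "X \<subseteq> Y \<or> Y \<subseteq> X" using sig_mono by blast
        qed
        have chG: "\<forall>X\<in>sig ` G. \<forall>Y\<in>sig ` G. X \<subseteq> Y \<or> Y \<subseteq> X"
        proof (intro ballI)
          fix X Y assume "X \<in> sig ` G" "Y \<in> sig ` G"
          then obtain X' Y' where "X' \<in> C" "Y' \<in> C" "X = sig X'" "Y = sig Y'" unfolding G_def by blast
          moreover have "X' \<subseteq> Y' \<or> Y' \<subseteq> X'" using Cch(2) calculation(1,2) by blast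
          ultimately show "X \<subseteq> Y \<or> Y \<subseteq> X" using sig_mono by blast
        qed
        have finL: "finite (sig ` L)" using finC unfolding L_def by (intro finite_imageI) simp
        have neL: "sig ` L \<noteq> {}" using \<open>{} \<in> L\<close> by blast
        have "\<Union>(sig ` L) \<in> sig ` L"
          using chain_Union_mem[OF finL neL chL] by blast
        then obtain Y0 where Y0: "Y0 \<in> L" "\<Union>(sig ` L) = sig Y0" by blast
        have finG: "finite (sig ` G)" using finC unfolding G_def by (intro finite_imageI) simp
        have neG: "sig ` G \<noteq> {}" using \<open>A \<in> G\<close> by blast
        have "\<Inter>(sig ` G) \<in> sig ` G"
          using chain_Union_mem[OF finG neG chG] by blast
        then obtain Y1 where Y1: "Y1 \<in> G" "\<Inter>(sig ` G) = sig Y1" by blast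
        have LG: "\<And>Y Y'. Y \<in> L \<Longrightarrow> Y' \<in> G \<Longrightarrow> sig Y \<subseteq> sig Y'"
        proof -
          fix Y Y' assume YY: "Y \<in> L" "Y' \<in> G"
          have "Y \<subseteq> Y' \<or> Y' \<subseteq> Y" using Cch YY unfolding L_def G_def by blast
          moreover have "\<not> Y' \<subseteq> Y"
          proof
            assume "Y' \<subseteq> Y"
            hence "card (sig Y') \<le> card (sig Y)" using cardmono YY unfolding L_def G_def by blast
            thus False using YY unfolding L_def G_def by simp
          qed
          ultimately show "sig Y \<subseteq> sig Y'" using sig_mono by blast
        qed
        have s01: "sig Y0 \<subseteq> sig Y1" using LG Y0 Y1 by blast
        have c0: "card (sig Y0) < j" using Y0 unfolding L_def by simp
        have c1: "card (sig Y1) > j" using Y1 unfolding G_def by simp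
        have "card (sig Y1 - sig Y0) = card (sig Y1) - card (sig Y0)"
          using s01 fin_sig card_Diff_subset by blast
        hence "j - card (sig Y0) \<le> card (sig Y1 - sig Y0)" using c0 c1 by simp
        then obtain T where T: "T \<subseteq> sig Y1 - sig Y0" "card T = j - card (sig Y0)" "finite T"
          using obtain_subset_with_card_n by blast
        define D where "D = sig Y0 \<union> T"
        have cD: "card D = j" unfolding D_def using T c0 fin_sig
          by (subst card_Un_disjoint) auto
        have D1: "D \<subseteq> sig Y1" unfolding D_def using T s01 by blast
        have sY1A: "sig Y1 \<subseteq> sig A" using sigsub Y1 AC Cch unfolding G_def by blast
        have DCl: "D \<subseteq> Cl" using D1 sY1A sig_Cl by blast
        define Z where "Z = phi D"
        have ZR: "Z \<in> Reg U R" using Reg_iff DCl unfolding Z_def by blast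
        have sZ: "sig Z = D" using sig_phi DCl unfolding Z_def by blast
        have ZA: "Z \<subseteq> A" using Reg_sub_iff[OF ZR A] sZ D1 sY1A by blast
        have "\<forall>Y\<in>C. Y \<subseteq> Z \<or> Z \<subseteq> Y"
        proof
          fix Y assume Y: "Y \<in> C"
          have YR: "Y \<in> Reg U R" using Y Cch by blast
          show "Y \<subseteq> Z \<or> Z \<subseteq> Y"
          proof (cases "Y \<in> L")
            case True
            hence "sig Y \<subseteq> D" using Y0 unfolding D_def by blast
            thus ?thesis using Reg_sub_iff[OF YR ZR] sZ by blast
          next
            case False
            hence "Y \<in> G" using Y CLG by blast
            hence "D \<subseteq> sig Y" using Y1 D1 by blast
            thus ?thesis using Reg_sub_iff[OF ZR YR] sZ by blast
          qed
        qed
        hence "Z \<in> C" using maxi ZR ZA by blast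
        thus False using nj sZ cD by force
      qed
    qed
  qed
  have "card C = card ((\<lambda>Y. card (sig Y)) ` C)" using injC card_image by metis
  also have "\<dots> = card (sig A) + 1" using img by simp
  finally show ?thesis .
qed

lemma max_chain_ex: "\<exists>C. maximal_reg_chain U R A C"
proof -
  have RegU: "\<And>X. X \<in> Reg U R \<Longrightarrow> X \<subseteq> U" unfolding Reg_def by blast
  have sub: "\<And>C. reg_chain U R A C \<Longrightarrow> C \<subseteq> Pow U"
    unfolding reg_chain_def using RegU by blast
  have finP: "finite (Pow U)" using fin by simp
  have "reg_chain U R A {}" unfolding reg_chain_def by blast
  moreover have "\<forall>C. reg_chain U R A C \<longrightarrow> card C < card (Pow U) + 1"
  proof (intro allI impI)
    fix C assume "reg_chain U R A C"
    hence "card C \<le> card (Pow U)" using sub finP by (intro card_mono) auto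
    thus "card C < card (Pow U) + 1" by simp
  qed
  ultimately obtain C where C: "reg_chain U R A C" "\<forall>C'. reg_chain U R A C' \<longrightarrow> card C' \<le> card C"
    using Lattices_Big.ex_has_greatest_nat[of "reg_chain U R A" "{}" card "card (Pow U) + 1"] by blast
  have "maximal_reg_chain U R A C" unfolding maximal_reg_chain_def
  proof (intro conjI allI impI)
    show "reg_chain U R A C" by fact
    fix C' assume C': "reg_chain U R A C' \<and> C \<subseteq> C'"
    have "finite C'" using sub[of C'] C' finP finite_subset by blast
    moreover have "card C' \<le> card C" using C(2) C' by blast
    ultimately show "C' = C" using C' card_seteq by blast
  qed
  thus ?thesis by blast
qed

lemma height_eq: assumes "A \<in> Reg U R" shows "height U R A = card (sig A)"
proof -
  have "\<exists>n. \<exists>C. maximal_reg_chain U R A C \<and> n = card C - 1" using max_chain_ex by blast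
  from someI_ex[OF this]
  have "\<exists>C. maximal_reg_chain U R A C \<and> height U R A = card C - 1"
    unfolding height_def .
  then obtain C where "maximal_reg_chain U R A C" "height U R A = card C - 1" by blast
  thus ?thesis using max_chain_card[OF assms] by simp
qed


lemma indep_char: "X \<in> indep_sets U R \<longleftrightarrow> X \<subseteq> U \<and> (\<forall>S. S \<subseteq> Cl \<longrightarrow> card (X \<inter> phi S) \<le> card S)"
proof
  assume X: "X \<in> indep_sets U R"
  have "\<forall>S. S \<subseteq> Cl \<longrightarrow> card (X \<inter> phi S) \<le> card S"
  proof (intro allI impI)
    fix S assume S: "S \<subseteq> Cl"
    have "phi S \<in> Reg U R" using Reg_iff S by blast
    hence "card (X \<inter> phi S) \<le> height U R (phi S)" using X unfolding indep_sets_def by blast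
    thus "card (X \<inter> phi S) \<le> card S" using height_eq[OF \<open>phi S \<in> Reg U R\<close>] sig_phi[OF S] by simp
  qed
  thus "X \<subseteq> U \<and> (\<forall>S. S \<subseteq> Cl \<longrightarrow> card (X \<inter> phi S) \<le> card S)" using X unfolding indep_sets_def by blast
next
  assume X: "X \<subseteq> U \<and> (\<forall>S. S \<subseteq> Cl \<longrightarrow> card (X \<inter> phi S) \<le> card S)"
  have "\<forall>Y\<in>Reg U R. card (X \<inter> Y) \<le> height U R Y"
  proof
    fix Y assume Y: "Y \<in> Reg U R"
    have "card (X \<inter> phi (sig Y)) \<le> card (sig Y)" using X sig_Cl by blast
    thus "card (X \<inter> Y) \<le> height U R Y" using Reg_phi_sig[OF Y] height_eq[OF Y] by simp
  qed
  thus "X \<in> indep_sets U R" using X unfolding indep_sets_def by blast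
qed

lemma augment:
  assumes i1: "I1 \<in> indep_sets U R" and i2: "I2 \<in> indep_sets U R" and lt: "card I1 < card I2"
  shows "\<exists>e\<in>I2 - I1. insert e I1 \<in> indep_sets U R"
proof (rule ccontr)
  assume H: "\<not> (\<exists>e\<in>I2 - I1. insert e I1 \<in> indep_sets U R)"
  have I1U: "I1 \<subseteq> U" and bnd1: "\<And>S. S \<subseteq> Cl \<Longrightarrow> card (I1 \<inter> phi S) \<le> card S"
    using i1 indep_char by blast+
  have I2U: "I2 \<subseteq> U" and bnd2: "\<And>S. S \<subseteq> Cl \<Longrightarrow> card (I2 \<inter> phi S) \<le> card S"
    using i2 indep_char by blast+
  have finI1: "finite I1" using I1U fin finite_subset by blast
  have finI2: "finite I2" using I2U fin finite_subset by blast
  define tight where "tight S \<longleftrightarrow> S \<subseteq> Cl \<and> card (I1 \<inter> phi S) = card S" for S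
  have t0: "tight {}" unfolding tight_def using phi_empty by simp
  have tUn: "tight (A \<union> B)" if tA: "tight A" and tB: "tight B" for A B
  proof -
    have AB: "A \<subseteq> Cl" "B \<subseteq> Cl" using tA tB unfolding tight_def by auto
    have fA: "finite A" "finite B" using AB fin_Cl finite_subset by blast+
    have e1: "card (I1 \<inter> phi A) = card A" "card (I1 \<inter> phi B) = card B" using tA tB unfolding tight_def by auto
    have "card ((I1 \<inter> phi A) \<union> (I1 \<inter> phi B)) \<le> card (I1 \<inter> phi (A \<union> B))"
      using finI1 phi_mono[of A "A \<union> B"] phi_mono[of B "A \<union> B"] by (intro card_mono) auto
    moreover have "card ((I1 \<inter> phi A) \<union> (I1 \<inter> phi B)) + card ((I1 \<inter> phi A) \<inter> (I1 \<inter> phi B))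
        = card (I1 \<inter> phi A) + card (I1 \<inter> phi B)"
      using card_Un_Int[of "I1 \<inter> phi A" "I1 \<inter> phi B"] finI1 by simp
    moreover have "card ((I1 \<inter> phi A) \<inter> (I1 \<inter> phi B)) = card (I1 \<inter> phi (A \<inter> B))"
    proof -
      have "(I1 \<inter> phi A) \<inter> (I1 \<inter> phi B) = I1 \<inter> phi (A \<inter> B)" using phi_Int by blast
      thus ?thesis by simp
    qed
    moreover have "card (I1 \<inter> phi (A \<inter> B)) \<le> card (A \<inter> B)" by (rule bnd1) (use AB in blast)
    moreover have "card (A \<union> B) + card (A \<inter> B) = card A + card B" using card_Un_Int[OF fA] by simp
    moreover have "card (I1 \<inter> phi (A \<union> B)) \<le> card (A \<union> B)" by (rule bnd1) (use AB in blast)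
    ultimately have "card (I1 \<inter> phi (A \<union> B)) = card (A \<union> B)" using e1 by linarith
    moreover have "A \<union> B \<subseteq> Cl" using AB by blast
    ultimately show ?thesis unfolding tight_def by blast
  qed
  have "\<forall>S. tight S \<longrightarrow> card S < card Cl + 1"
  proof (intro allI impI)
    fix S assume "tight S"
    hence "S \<subseteq> Cl" unfolding tight_def by blast
    hence "card S \<le> card Cl" using fin_Cl by (rule card_mono[rotated])
    thus "card S < card Cl + 1" by simp
  qed
  then obtain Sm where Sm: "tight Sm" "\<And>S. tight S \<Longrightarrow> card S \<le> card Sm"
    using Lattices_Big.ex_has_greatest_nat[of tight "{}" card "card Cl + 1"] t0 by blast
  have Dsub: "I2 - I1 \<subseteq> phi Sm"
  proof
    fix e assume e: "e \<in> I2 - I1"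
    have "insert e I1 \<notin> indep_sets U R" using H e by blast
    moreover have "insert e I1 \<subseteq> U" using e I2U I1U by blast
    ultimately have "\<not> (\<forall>S. S \<subseteq> Cl \<longrightarrow> card (insert e I1 \<inter> phi S) \<le> card S)"
      using indep_char[of "insert e I1"] by blast
    then obtain S where S: "S \<subseteq> Cl" "\<not> card (insert e I1 \<inter> phi S) \<le> card S"
      by blast
    have eS: "e \<in> phi S"
    proof (rule ccontr)
      assume "e \<notin> phi S"
      hence "insert e I1 \<inter> phi S = I1 \<inter> phi S" by blast
      thus False using S(2) bnd1[OF S(1)] by simp
    qed
    hence "insert e I1 \<inter> phi S = insert e (I1 \<inter> phi S)" by blast
    hence "card (insert e I1 \<inter> phi S) = card (I1 \<inter> phi S) + 1" using e finI1 by simp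
    hence "tight S" using S bnd1[OF S(1)] unfolding tight_def by simp
    hence tSS: "tight (S \<union> Sm)" using tUn[OF _ Sm(1)] by blast
    hence le: "card (S \<union> Sm) \<le> card Sm" by (rule Sm(2))
    have "S \<union> Sm \<subseteq> Cl" using tSS unfolding tight_def by blast
    hence finSS: "finite (S \<union> Sm)" using fin_Cl finite_subset by blast
    have "Sm \<subseteq> S \<union> Sm" by blast
    from card_seteq[OF finSS this le] have "S \<union> Sm = Sm" by simp
    hence "phi S \<subseteq> phi Sm" using phi_mono by blast
    thus "e \<in> phi Sm" using eS by blast
  qed
  define P where "P = phi Sm"
  have SmCl: "Sm \<subseteq> Cl" using Sm unfolding tight_def by blast
  have a1: "card ((I2 - I1) \<union> (I1 \<inter> I2 \<inter> P)) \<le> card (I2 \<inter> P)"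
    using finI2 Dsub unfolding P_def by (intro card_mono) auto
  have a2: "card ((I2 - I1) \<union> (I1 \<inter> I2 \<inter> P)) = card (I2 - I1) + card (I1 \<inter> I2 \<inter> P)"
    using finI1 finI2 by (intro card_Un_disjoint) auto
  have a3: "I1 \<inter> P = (I1 \<inter> I2 \<inter> P) \<union> ((I1 - I2) \<inter> P)" by blast
  have a4: "card (I1 \<inter> P) = card (I1 \<inter> I2 \<inter> P) + card ((I1 - I2) \<inter> P)"
    unfolding a3 using finI1 by (intro card_Un_disjoint) auto
  have a5: "card ((I1 - I2) \<inter> P) \<le> card (I1 - I2)" using finI1 by (intro card_mono) auto
  have a6: "card I1 = card (I1 \<inter> I2) + card (I1 - I2)"
    using finI1 card_Int_Diff[of I1 I2] by simp
  have a7: "card I2 = card (I1 \<inter> I2) + card (I2 - I1)"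
    using finI2 card_Int_Diff[of I2 I1] by (simp add: Int_commute)
  have a8: "card (I1 \<inter> P) = card Sm" using Sm unfolding tight_def P_def by blast
  have a9: "card (I2 \<inter> P) \<le> card Sm" using bnd2[OF SmCl] unfolding P_def .
  show False using a1 a2 a4 a5 a6 a7 a8 a9 lt by linarith
qed

lemma main:
  "{} \<in> indep_sets U R \<and>
   (\<forall>I I'. I \<in> indep_sets U R \<and> I' \<subseteq> I \<longrightarrow> I' \<in> indep_sets U R) \<and>
   (\<forall>I1 I2. I1 \<in> indep_sets U R \<and> I2 \<in> indep_sets U R \<and> card I1 < card I2 \<longrightarrow>
     (\<exists>e\<in>I2 - I1. insert e I1 \<in> indep_sets U R))"
proof (intro conjI allI impI)
  show "{} \<in> indep_sets U R" unfolding indep_sets_def by simp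
next
  fix I I' assume a: "I \<in> indep_sets U R \<and> I' \<subseteq> I"
  hence IU: "I \<subseteq> U" unfolding indep_sets_def by blast
  have "\<forall>Y\<in>Reg U R. card (I' \<inter> Y) \<le> height U R Y"
  proof
    fix Y assume Y: "Y \<in> Reg U R"
    have "card (I' \<inter> Y) \<le> card (I \<inter> Y)"
      using a IU fin finite_subset by (intro card_mono) blast+
    thus "card (I' \<inter> Y) \<le> height U R Y" using a Y unfolding indep_sets_def by fastforce
  qed
  thus "I' \<in> indep_sets U R" using a IU unfolding indep_sets_def by blast
next
  fix I1 I2 assume "I1 \<in> indep_sets U R \<and> I2 \<in> indep_sets U R \<and> card I1 < card I2"
  thus "\<exists>e\<in>I2 - I1. insert e I1 \<in> indep_sets U R" using augment by blast
qed

end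

theorem proposition2:
  fixes U :: "'a set" and R :: "('a \<times> 'a) set"
  assumes "finite U" and "U \<noteq> {}"
    and "R \<subseteq> U \<times> U"
    and "serial_on U R"
    and "trans R"
  shows "{} \<in> indep_sets U R \<and>
         (\<forall>I I'. I \<in> indep_sets U R \<and> I' \<subseteq> I \<longrightarrow> I' \<in> indep_sets U R) \<and>
         (\<forall>I1 I2. I1 \<in> indep_sets U R \<and> I2 \<in> indep_sets U R \<and> card I1 < card I2 \<longrightarrow>
           (\<exists>e\<in>I2 - I1. insert e I1 \<in> indep_sets U R))"
proof -
  interpret srt U R using assms by unfold_locales
  show ?thesis by (rule main)
qed

end
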